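(* Let $S\subseteq 2^E$ be a powerful set with $|E|=n$ and $r_S(E)=n-1$. Then there is at most one element $e\in E$ with $r_S(\{e\})\neq 1$.
   Context: A set $S\subseteq 2^E$ ($E$ finite) is powerful if for every $X\subseteq E$ the number of members of $S$ contained in $X$ is a power of 2. Its rank function is $r_S(X)=\log_2\big(|S|/|\{Y\in S:Y\subseteq E\setminus X\}|\big)$. The order of $S$ is $|E|$ and the rank of $S$ is $r_S(E)$. *)

theory Defs
  imports Complex_Main
begin

definition powerful :: "'a set \<Rightarrow> 'a set set \<Rightarrow> bool" where
  "powerful E S \<longleftrightarrow> finite E \<and> S \<subseteq> Pow E \<and>
     (\<forall>X. X \<subseteq> E \<longrightarrow> (\<exists>k::nat. card {Y \<in> S. Y \<subseteq> X} = 2 ^ k))"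

definition rankS :: "'a set \<Rightarrow> 'a set set \<Rightarrow> 'a set \<Rightarrow> real" where
  "rankS E S X = log 2 (real (card S) / real (card {Y \<in> S. Y \<subseteq> E - X}))"

end

theory Submission
  imports Defs
begin

lemma pow2_cases:
  fixes j m :: nat
  assumes "(2::nat)^j \<le> 2^(Suc m)" "2 * 2^j \<noteq> (2::nat)^(Suc m)"
  shows "(2::nat)^j = 2^(Suc m) \<or> 4 * 2^j \<le> (2::nat)^(Suc m)"
proof -
  have "j \<le> Suc m" by (rule power_le_imp_le_exp[OF _ assms(1)]) simp
  moreover have "j \<noteq> m" using assms(2) by auto
  ultimately have "j = Suc m \<or> j + 2 \<le> Suc m" by auto
  then show ?thesis
  proof
    assume "j + 2 \<le> Suc m"
    then have "(2::nat)^(j+2) \<le> 2^(Suc m)" by (rule power_increasing) simp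
    then show ?thesis by (simp add: power_add)
  qed simp
qed

lemma class_bound:
  assumes S: "S \<subseteq> Pow E" and fin: "finite E" and ef: "e \<in> E" "f \<in> E" "e \<noteq> f"
  shows "card {Y\<in>S. (e \<in> Y) = a \<and> (f \<in> Y) = b} \<le> 2 ^ (card E - 2)"
proof -
  let ?P = "{Y\<in>S. (e \<in> Y) = a \<and> (f \<in> Y) = b}"
  have inj: "inj_on (\<lambda>Y. Y - {e,f}) ?P"
  proof (rule inj_onI)
    fix X Y assume X: "X \<in> ?P" and Y: "Y \<in> ?P" and eq: "X - {e,f} = Y - {e,f}"
    show "X = Y"
    proof
      show "X \<subseteq> Y" using X Y eq by blast
      show "Y \<subseteq> X" using X Y eq by blast
    qed
  qed
  have img: "(\<lambda>Y. Y - {e,f}) ` ?P \<subseteq> Pow (E - {e,f})" using S by auto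
  have "card ?P \<le> card (Pow (E - {e,f}))"
    by (rule card_inj_on_le[OF inj img]) (simp add: fin)
  also have "\<dots> = 2 ^ (card E - 2)"
    using fin ef by (simp add: card_Pow card_Diff_subset)
  finally show ?thesis .
qed

theorem lemma1:
  fixes E :: "'a set" and S :: "'a set set"
  assumes "powerful E S"
    and "rankS E S E = real (card E) - 1"
  shows "card {e \<in> E. rankS E S {e} \<noteq> 1} \<le> 1"
proof -
  have fin: "finite E" and SP: "S \<subseteq> Pow E"
    and pw: "\<And>X. X \<subseteq> E \<Longrightarrow> \<exists>k::nat. card {Y \<in> S. Y \<subseteq> X} = 2 ^ k"
    using assms(1) unfolding powerful_def by auto
  have finS: "finite S" using SP fin by (meson finite_Pow_iff rev_finite_subset)
  obtain k where k: "card {Y \<in> S. Y \<subseteq> E} = 2 ^ k" using pw by blast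
  have "{Y \<in> S. Y \<subseteq> E} = S" using SP by auto
  with k have cS: "card S = 2 ^ k" by simp
  obtain k0 where k0: "card {Y \<in> S. Y \<subseteq> {}} = 2 ^ k0" using pw[of "{}"] by blast
  have sub0: "{Y \<in> S. Y \<subseteq> {}} \<subseteq> {{}}" by auto
  have "card {Y \<in> S. Y \<subseteq> {}} \<le> 1"
    using card_mono[OF _ sub0] by simp
  with k0 have c0: "card {Y \<in> S. Y \<subseteq> {}} = 1"
    by (metis le_antisym one_le_numeral one_le_power)
  have "rankS E S E = log 2 (real (card S))"
    unfolding rankS_def using c0 by simp
  also have "\<dots> = real k" using cS by simp
  finally have "real k = real (card E) - 1" using assms(2) by simp
  then have nk: "card E = Suc k" by linarith
  have emp: "{} \<in> S"
  proof -
    obtain x where "{Y \<in> S. Y \<subseteq> {}} = {x}" using c0 by (rule card_1_singletonE)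
    then have "x \<in> S" "x = {}" by auto
    then show ?thesis by simp
  qed
  define A where "A e = {Y \<in> S. Y \<subseteq> E - {e}}" for e
  have A_alt: "A e = {Y \<in> S. e \<notin> Y}" for e using SP unfolding A_def by auto
  have key: "card S \<noteq> 2 * card (A e) \<and> (\<exists>j. card (A e) = 2 ^ j)"
    if "e \<in> E" "rankS E S {e} \<noteq> 1" for e
  proof
    obtain j where j: "card (A e) = 2 ^ j" using pw[of "E - {e}"] unfolding A_def by auto
    then show "\<exists>j. card (A e) = 2 ^ j" by blast
    show "card S \<noteq> 2 * card (A e)"
    proof
      assume h: "card S = 2 * card (A e)"
      have "rankS E S {e} = log 2 (real (card S) / real (card (A e)))"
        unfolding rankS_def A_def by simp
      also have "\<dots> = 1" using h j by simp
      finally show False using that by simp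
    qed
  qed
  have main: "e = f" if e: "e \<in> E" "rankS E S {e} \<noteq> 1" and f: "f \<in> E" "rankS E S {f} \<noteq> 1" for e f
  proof (rule ccontr)
    assume nef: "e \<noteq> f"
    obtain m where m: "k = Suc m"
    proof (cases k)
      case 0
      then have "card E = 1" using nk by simp
      then show ?thesis using e f nef by (metis card_1_singletonE singletonD)
    next
      case (Suc m) then show ?thesis using that by simp
    qed
    have cE2: "card E - 2 = m" using nk m by simp
    define p where "p a b = card {Y\<in>S. (e \<in> Y) = a \<and> (f \<in> Y) = b}" for a b
    have pb: "p a b \<le> 2 ^ m" for a b
      unfolding p_def using class_bound[OF SP fin e(1) f(1) nef] cE2 by simp
    have fsub: "finite {Y\<in>S. P Y}" for P using finS by simp
    have Ae: "card (A e) = p False False + p False True"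
    proof -
      have "A e = {Y\<in>S. (e \<in> Y) = False \<and> (f \<in> Y) = False} \<union> {Y\<in>S. (e \<in> Y) = False \<and> (f \<in> Y) = True}"
        unfolding A_alt by auto
      then show ?thesis unfolding p_def by (simp add: card_Un_disjoint[OF fsub fsub] disjoint_iff)
    qed
    have Af: "card (A f) = p False False + p True False"
    proof -
      have "A f = {Y\<in>S. (e \<in> Y) = False \<and> (f \<in> Y) = False} \<union> {Y\<in>S. (e \<in> Y) = True \<and> (f \<in> Y) = False}"
        unfolding A_alt by auto
      then show ?thesis unfolding p_def by (simp add: card_Un_disjoint[OF fsub fsub] disjoint_iff)
    qed
    have Se: "card S = card (A e) + p True False + p True True"
    proof -
      have "S = A e \<union> ({Y\<in>S. (e \<in> Y) = True \<and> (f \<in> Y) = False} \<union> {Y\<in>S. (e \<in> Y) = True \<and> (f \<in> Y) = True})"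
        unfolding A_alt by auto
      then have "card S = card ({Y\<in>S. e \<notin> Y} \<union> ({Y\<in>S. e \<in> Y \<and> f \<notin> Y} \<union> {Y\<in>S. e \<in> Y \<and> f \<in> Y}))"
        unfolding A_alt by simp
      also have "\<dots> = card {Y\<in>S. e \<notin> Y} + card ({Y\<in>S. e \<in> Y \<and> f \<notin> Y} \<union> {Y\<in>S. e \<in> Y \<and> f \<in> Y})"
        by (rule card_Un_disjoint) (use finS in auto)
      also have "card ({Y\<in>S. e \<in> Y \<and> f \<notin> Y} \<union> {Y\<in>S. e \<in> Y \<and> f \<in> Y}) = card {Y\<in>S. e \<in> Y \<and> f \<notin> Y} + card {Y\<in>S. e \<in> Y \<and> f \<in> Y}"
        by (rule card_Un_disjoint) (use finS in auto)
      finally have "card S = card (A e) + (p True False + p True True)"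
        unfolding p_def A_alt by simp
      then show ?thesis by simp
    qed
    have p00: "p False False \<ge> 1"
    proof -
      have "{} \<in> {Y\<in>S. (e \<in> Y) = False \<and> (f \<in> Y) = False}" using emp by simp
      then show ?thesis unfolding p_def using fsub by (metis card_0_eq empty_iff less_one not_le)
    qed
    have cSm: "card S = 2 * 2 ^ m" using cS m by simp
    obtain je where je: "card (A e) = 2 ^ je" using key[OF e] by blast
    obtain jf where jf: "card (A f) = 2 ^ jf" using key[OF f] by blast
    have le_e: "card (A e) \<le> card S" unfolding A_alt by (rule card_mono[OF finS]) auto
    have le_f: "card (A f) \<le> card S" unfolding A_alt by (rule card_mono[OF finS]) auto
    have ce: "card (A e) = card S \<or> 4 * card (A e) \<le> card S"
      using pow2_cases[of je m] je le_e key[OF e] cS m by simp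
    have cf: "card (A f) = card S \<or> 4 * card (A f) \<le> card S"
      using pow2_cases[of jf m] jf le_f key[OF f] cS m by simp
    have ne: "card S \<noteq> 2 * card (A e)" "card S \<noteq> 2 * card (A f)" using key[OF e] key[OF f] by auto
    show False
      using ce cf ne Ae Af Se p00 cSm pb[of False False] pb[of False True] pb[of True False] pb[of True True]
      by linarith
  qed
  have "{e \<in> E. rankS E S {e} \<noteq> 1} \<subseteq> E" by auto
  then have "finite {e \<in> E. rankS E S {e} \<noteq> 1}" using fin by (rule finite_subset)
  then have "card {e \<in> E. rankS E S {e} \<noteq> 1} \<le> Suc 0"
    using main by (subst card_le_Suc0_iff_eq) auto
  then show ?thesis by simp
qed

end
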